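(* Let $0<x<1$ and put $g=x\frac{1+x+x^2}{(1+4x+x^2)^2}$. For integers $s\ge 0$ let $$R_s=\frac{1+4x+x^2}{1+x+x^2}\,\frac{(1-x^s)(1-x^{s+3})}{(1-x^{s+1})(1-x^{s+2})}$$ (so $R_0=0$), and for integers $s,t\ge 0$ let $$X_{s,t}=\frac{(1-x^3)(1-x^{s+1})(1-x^{t+1})(1-x^{s+t+3})}{(1-x)(1-x^{s+3})(1-x^{t+3})(1-x^{s+t+1})}.$$ Then $X_{s,0}=X_{0,t}=1$, and for all $s,t\ge 0$ $$X_{s,t}=1+g\,R_sR_t\,X_{s,t}\bigl(1+g\,R_{s+1}R_{t+1}X_{s+1,t+1}\bigr).$$ Moreover, for every $s\ge 1$, $$\log\!\left(\frac{X_{s,s}X_{s-1,s-1}}{X_{s-1,s}X_{s,s-1}}\right)=\log\left\{\frac{(1-x^{2s+3})(1-x^{2s})^2}{(1-x^{2s-1})(1-x^{2s+2})^2}\right\}.$$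
   Context: The quantity $X_{s,t}$ at $z=1$ is the generating function (weight $g$ per edge) of labelled chains with left labels $\ge 1-s$ and right labels $\ge 1-t$; the displayed recursion is the equation characterizing it, and the logarithmic expression is the generating function $F_s(g,1)$ of bi-pointed planar quadrangulations (weight $g$ per face) whose two marked vertices are at graph distance $2s$. *)

theory Defs
  imports Complex_Main
begin

definition gq :: "real \<Rightarrow> real" where
  "gq x = x * (1 + x + x^2) / (1 + 4*x + x^2)^2"

definition Rq :: "real \<Rightarrow> nat \<Rightarrow> real" where
  "Rq x s = (1 + 4*x + x^2) / (1 + x + x^2) *
     ((1 - x^s) * (1 - x^(s+3)) / ((1 - x^(s+1)) * (1 - x^(s+2))))"

definition Xq :: "real \<Rightarrow> nat \<Rightarrow> nat \<Rightarrow> real" where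
  "Xq x s t = ((1 - x^3) * (1 - x^(s+1)) * (1 - x^(t+1)) * (1 - x^(s+t+3))) /
     ((1 - x) * (1 - x^(s+3)) * (1 - x^(t+3)) * (1 - x^(s+t+1)))"

end

theory Submission
  imports Defs
begin

definition Rf :: "real \<Rightarrow> real \<Rightarrow> real" where
  "Rf x a = (1 + 4*x + x^2) / (1 + x + x^2) * ((1 - a) * (1 - a*x^3) / ((1 - a*x) * (1 - a*x^2)))"

definition Xf :: "real \<Rightarrow> real \<Rightarrow> real \<Rightarrow> real" where
  "Xf x a b = ((1 - x^3) * (1 - a*x) * (1 - b*x) * (1 - a*b*x^3)) /
     ((1 - x) * (1 - a*x^3) * (1 - b*x^3) * (1 - a*b*x))"

definition Yf :: "real \<Rightarrow> real \<Rightarrow> real \<Rightarrow> real" where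
  "Yf x a b = x*(1-a)*(1-b)*(1-a*b*x^3)/((1-a*x^2)*(1-b*x^2)*(1-a*b*x))"

lemma Rq_eq: "Rq x s = Rf x (x^s)"
  unfolding Rq_def Rf_def by (simp add: power_add mult_ac power2_eq_square)

lemma Xq_eq: "Xq x s t = Xf x (x^s) (x^t)"
  unfolding Xq_def Xf_def by (simp add: power_add mult_ac)

lemma L1:
  fixes x a b :: real
  assumes d: "1-a*x\<noteq>0" "1-a*x^2\<noteq>0" "1-a*x^3\<noteq>0" "1-b*x\<noteq>0" "1-b*x^2\<noteq>0" "1-b*x^3\<noteq>0"
     "1-a*b*x\<noteq>0" and e: "1-x\<noteq>0" "1+x+x^2\<noteq>0" "1+4*x+x^2\<noteq>0"
  shows "gq x * Rf x a * Rf x b * Xf x a b = Yf x a b"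
proof -
  have c: "1-x^3 = (1-x)*(1+x+x^2)" by algebra
  have gen: "\<And>P Q w u1 u2 u3 v1 v2 v3 ab1 a0 b0 ab3 :: real. P \<noteq> 0 \<Longrightarrow> Q \<noteq> 0 \<Longrightarrow> w \<noteq> 0 \<Longrightarrow>
     u1 \<noteq> 0 \<Longrightarrow> u2 \<noteq> 0 \<Longrightarrow> u3 \<noteq> 0 \<Longrightarrow> v1 \<noteq> 0 \<Longrightarrow> v2 \<noteq> 0 \<Longrightarrow> v3 \<noteq> 0 \<Longrightarrow> ab1 \<noteq> 0 \<Longrightarrow>
     x*P/Q^2 * (Q/P*(a0*u3/(u1*u2))) * (Q/P*(b0*v3/(v1*v2))) * ((w*P)*u1*v1*ab3/(w*u3*v3*ab1))
       = x*a0*b0*ab3/(u2*v2*ab1)"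
    by (simp add: field_simps power2_eq_square)
  show ?thesis unfolding gq_def Rf_def Xf_def Yf_def c by (rule gen[OF e(2) e(3) e(1) d])
qed

lemma L2:
  fixes x a b :: real
  assumes d: "1-a*x^2\<noteq>0" "1-a*x^3\<noteq>0" "1-b*x^2\<noteq>0" "1-b*x^3\<noteq>0"
     "1-a*b*x\<noteq>0" "1-a*b*x^3\<noteq>0" and e: "1-x\<noteq>0"
  shows "Xf x a b = 1 + Yf x a b * (1 + Yf x (a*x) (b*x))"
proof -
  define E1 where "E1 = (1-a*x^2)*(1-b*x^2)*(1-a*b*x)"
  define E2 where "E2 = (1-a*x^3)*(1-b*x^3)*(1-a*b*x^3)"
  define N1 where "N1 = x*(1-a)*(1-b)*(1-a*b*x^3)"
  define N2 where "N2 = x*(1-a*x)*(1-b*x)*(1-a*b*x^5)"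
  define D where "D = (1-x)*(1-a*x^3)*(1-b*x^3)*(1-a*b*x)"
  define N where "N = (1-x^3)*(1-a*x)*(1-b*x)*(1-a*b*x^3)"
  have nz: "E1 \<noteq> 0" "E2 \<noteq> 0" "D \<noteq> 0" using d e by (auto simp: E1_def E2_def D_def)
  have r: "1 + N1/E1*(1+N2/E2) = (E1*E2 + N1*(E2+N2))/(E1*E2)" using nz by (simp add: field_simps)
  have poly: "N*(E1*E2) = (E1*E2 + N1*(E2+N2))*D"
    unfolding N_def E1_def E2_def N1_def N2_def D_def by algebra
  have "N/D = 1 + N1/E1*(1+N2/E2)" unfolding r using nz poly by (simp add: frac_eq_eq)
  moreover have "Yf x (a*x) (b*x) = N2/E2" unfolding Yf_def N2_def E2_def
    by (simp add: algebra_simps power2_eq_square power3_eq_cube eval_nat_numeral)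
  ultimately show ?thesis by (simp add: N_def D_def N1_def E1_def Yf_def Xf_def)
qed

lemma L3:
  fixes x a :: real
  assumes d: "1-a*x^3\<noteq>0" "1-a*x^4\<noteq>0" "1-a*a*x\<noteq>0" "1-a*a*x^2\<noteq>0" "1-a*a*x^3\<noteq>0"
     "1-a*a*x^4\<noteq>0" "1-a*x\<noteq>0" "1-a*x^2\<noteq>0" and e: "1-x\<noteq>0" "1-x^3\<noteq>0"
  shows "Xf x (a*x) (a*x) * Xf x a a / (Xf x a (a*x) * Xf x (a*x) a)
     = (1-a*a*x^5)*(1-a*a*x^2)^2/((1-a*a*x)*(1-a*a*x^4)^2)"
proof -
  have f1: "Xf x (a*x) (a*x) = (1-x^3)/(1-x) * (1-a*x^2)*(1-a*x^2)*(1-a*a*x^5) / ((1-a*x^4)*(1-a*x^4)*(1-a*a*x^3))"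
    unfolding Xf_def by (simp add: eval_nat_numeral mult_ac)
  have f2: "Xf x a a = (1-x^3)/(1-x) * (1-a*x)*(1-a*x)*(1-a*a*x^3) / ((1-a*x^3)*(1-a*x^3)*(1-a*a*x))"
    unfolding Xf_def by (simp add: eval_nat_numeral mult_ac)
  have f3: "Xf x a (a*x) = (1-x^3)/(1-x) * (1-a*x)*(1-a*x^2)*(1-a*a*x^4) / ((1-a*x^3)*(1-a*x^4)*(1-a*a*x^2))"
    unfolding Xf_def by (simp add: eval_nat_numeral mult_ac)
  have f4: "Xf x (a*x) a = (1-x^3)/(1-x) * (1-a*x)*(1-a*x^2)*(1-a*a*x^4) / ((1-a*x^3)*(1-a*x^4)*(1-a*a*x^2))"
    unfolding Xf_def by (simp add: eval_nat_numeral mult_ac)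
  have g: "\<And>c u1 u2 u3 u4 v1 v2 v3 v4 v5 :: real. c \<noteq> 0 \<Longrightarrow> u1 \<noteq> 0 \<Longrightarrow> u2 \<noteq> 0 \<Longrightarrow>
     u3 \<noteq> 0 \<Longrightarrow> u4 \<noteq> 0 \<Longrightarrow> v1 \<noteq> 0 \<Longrightarrow> v2 \<noteq> 0 \<Longrightarrow> v3 \<noteq> 0 \<Longrightarrow> v4 \<noteq> 0 \<Longrightarrow>
     (c*u2*u2*v5/(u4*u4*v3)) * (c*u1*u1*v3/(u3*u3*v1)) / ((c*u1*u2*v4/(u3*u4*v2))*(c*u1*u2*v4/(u3*u4*v2)))
      = v5*v2^2/(v1*v4^2)"
    by (simp add: field_simps power2_eq_square)
  have c0: "(1-x^3)/(1-x) \<noteq> 0" using e by simp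
  show ?thesis unfolding f1 f2 f3 f4 by (rule g[OF c0 d(7) d(8) d(1) d(2) d(3) d(4) d(5) d(6)])
qed

lemma nz1:
  fixes x :: real
  assumes "0 < x" "x < 1" "1 \<le> k"
  shows "1 - x^m*x^k \<noteq> 0"
proof -
  have "x^(m+k) < 1" using assms power_less_one_iff[of x "m+k"] by simp
  thus ?thesis by (simp add: power_add)
qed

lemma nz2:
  fixes x :: real
  assumes "0 < x" "x < 1" "1 \<le> k"
  shows "1 - x^m*x^n*x^k \<noteq> 0"
proof -
  have "x^(m+n+k) < 1" using assms power_less_one_iff[of x "m+n+k"] by simp
  thus ?thesis by (simp add: power_add)
qed

lemma Xf_one:
  fixes x a :: real
  assumes "1-x \<noteq> 0" "1-x^3 \<noteq> 0" "1-a*x \<noteq> 0" "1-a*x^3 \<noteq> 0"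
  shows "Xf x a 1 = 1" "Xf x 1 a = 1"
proof -
  define P where "P = (1-x)*(1-a*x^3)*(1-x^3)*(1-a*x)"
  have P: "P \<noteq> 0" using assms by (simp add: P_def)
  have "Xf x a 1 = P/P" "Xf x 1 a = P/P" by (simp_all add: Xf_def P_def mult_ac)
  thus "Xf x a 1 = 1" "Xf x 1 a = 1" using P by simp_all
qed

theorem mainTheorem1:
  fixes x :: real
  assumes "0 < x" and "x < 1"
  shows "(\<forall>s t. Xq x s 0 = 1 \<and> Xq x 0 t = 1)
    \<and> (\<forall>s t. Xq x s t = 1 + gq x * Rq x s * Rq x t * Xq x s t *
            (1 + gq x * Rq x (s+1) * Rq x (t+1) * Xq x (s+1) (t+1)))
    \<and> (\<forall>s::nat. s \<ge> 1 \<longrightarrow>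
          ln (Xq x s s * Xq x (s-1) (s-1) / (Xq x (s-1) s * Xq x s (s-1)))
        = ln (((1 - x^(2*s+3)) * (1 - x^(2*s))^2) /
              ((1 - x^(2*s-1)) * (1 - x^(2*s+2))^2)))"
proof -
  have q1: "\<And>m. 1 - x^m*x \<noteq> 0" using nz1[OF assms, of 1] by simp
  have q2: "\<And>m. 1 - x^m*x^2 \<noteq> 0" using nz1[OF assms, of 2] by simp
  have q3: "\<And>m. 1 - x^m*x^3 \<noteq> 0" using nz1[OF assms, of 3] by simp
  have q4: "\<And>m. 1 - x^m*x^4 \<noteq> 0" using nz1[OF assms, of 4] by simp
  have r1: "\<And>m n. 1 - x^m*x^n*x \<noteq> 0" using nz2[OF assms, of 1] by simp
  have r2: "\<And>m n. 1 - x^m*x^n*x^2 \<noteq> 0" using nz2[OF assms, of 2] by simp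
  have r3: "\<And>m n. 1 - x^m*x^n*x^3 \<noteq> 0" using nz2[OF assms, of 3] by simp
  have r4: "\<And>m n. 1 - x^m*x^n*x^4 \<noteq> 0" using nz2[OF assms, of 4] by simp
  have e: "1-x\<noteq>0" "1+x+x^2\<noteq>0" "1+4*x+x^2\<noteq>0" "1-x^3 \<noteq> 0"
    using assms q3[of 0] by (auto, smt (verit) zero_le_power2, smt (verit) zero_le_power2)
  have A: "\<forall>s t. Xq x s 0 = 1 \<and> Xq x 0 t = 1"
  proof (intro allI conjI)
    fix s t :: nat
    show "Xq x s 0 = 1" unfolding Xq_eq power_0 by (rule Xf_one(1)[OF e(1) e(4) q1 q3])
    show "Xq x 0 t = 1" unfolding Xq_eq power_0 by (rule Xf_one(2)[OF e(1) e(4) q1 q3])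
  qed
  have B: "\<forall>s t. Xq x s t = 1 + gq x * Rq x s * Rq x t * Xq x s t *
            (1 + gq x * Rq x (s+1) * Rq x (t+1) * Xq x (s+1) (t+1))"
  proof (intro allI)
    fix s t :: nat
    have l1a: "gq x * Rf x (x^s) * Rf x (x^t) * Xf x (x^s) (x^t) = Yf x (x^s) (x^t)"
      by (rule L1[OF q1 q2 q3 q1 q2 q3 r1 e(1) e(2) e(3)])
    have l1b: "gq x * Rf x (x^(s+1)) * Rf x (x^(t+1)) * Xf x (x^(s+1)) (x^(t+1)) = Yf x (x^(s+1)) (x^(t+1))"
      by (rule L1[OF q1 q2 q3 q1 q2 q3 r1 e(1) e(2) e(3)])
    have l2: "Xf x (x^s) (x^t) = 1 + Yf x (x^s) (x^t) * (1 + Yf x (x^s*x) (x^t*x))"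
      by (rule L2[OF q2 q3 q2 q3 r1 r3 e(1)])
    have pw: "\<And>m. x^m*x = x^(m+1)" by (simp add: mult.commute)
    show "Xq x s t = 1 + gq x * Rq x s * Rq x t * Xq x s t *
            (1 + gq x * Rq x (s+1) * Rq x (t+1) * Xq x (s+1) (t+1))"
      unfolding Rq_eq Xq_eq l1a l1b using l2 by (simp only: pw)
  qed
  have C: "\<forall>s::nat. s \<ge> 1 \<longrightarrow>
          ln (Xq x s s * Xq x (s-1) (s-1) / (Xq x (s-1) s * Xq x s (s-1)))
        = ln (((1 - x^(2*s+3)) * (1 - x^(2*s))^2) /
              ((1 - x^(2*s-1)) * (1 - x^(2*s+2))^2))"
  proof (intro allI impI)
    fix s :: nat assume s: "s \<ge> 1"
    obtain k where k: "s = Suc k" using s by (cases s) auto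
    define a where "a = x^(s-1)"
    have ak: "a = x^k" by (simp add: a_def k)
    have xs: "x^s = a*x" by (simp add: ak k mult.commute)
    have p: "\<And>j. x^(2*s+j) = a*a*x^(j+2)"
    proof -
      fix j
      have "x^(2*s+j) = x^s*x^s*x^j" unfolding mult_2 power_add by simp
      thus "x^(2*s+j) = a*a*x^(j+2)" by (simp add: xs power_add power2_eq_square mult_ac)
    qed
    have p1: "x^(2*s-1) = a*a*x"
    proof -
      have "2*s-1 = k+k+1" using k by simp
      hence "x^(2*s-1) = x^k*x^k*x" by (simp only: power_add power_one_right)
      thus ?thesis by (simp add: ak)
    qed
    have t3: "x^(2*s+3) = a*a*x^5" using p[of 3] by simp
    have t2: "x^(2*s+2) = a*a*x^4" using p[of 2] by simp
    have t0: "x^(2*s) = a*a*x^2" using p[of 0] by (simp add: power2_eq_square)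
    have l3: "Xf x (a*x) (a*x) * Xf x a a / (Xf x a (a*x) * Xf x (a*x) a)
       = (1-a*a*x^5)*(1-a*a*x^2)^2/((1-a*a*x)*(1-a*a*x^4)^2)"
      unfolding a_def by (rule L3[OF q3 q4 r1 r2 r3 r4 q1 q2 e(1) e(4)])
    have "Xq x s s * Xq x (s-1) (s-1) / (Xq x (s-1) s * Xq x s (s-1))
       = ((1 - x^(2*s+3)) * (1 - x^(2*s))^2) / ((1 - x^(2*s-1)) * (1 - x^(2*s+2))^2)"
      unfolding Xq_eq xs a_def[symmetric] p1 t3 t0 t2 by (rule l3)
    thus "ln (Xq x s s * Xq x (s-1) (s-1) / (Xq x (s-1) s * Xq x s (s-1)))
        = ln (((1 - x^(2*s+3)) * (1 - x^(2*s))^2) /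
              ((1 - x^(2*s-1)) * (1 - x^(2*s+2))^2))" by simp
  qed
  show ?thesis using A B C by blast
qed

end
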